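(* Let $p\in[1,\infty]$, let $(\epsilon_n)_{n\ge1}$ be a sequence in $[0,\infty)^2$ converging to $(0,0)$, and let $X,Y$ be compact pmm-spaces. Then \[ \lim_{n\to\infty}\mathsf{PGW}_{\epsilon_n,p}(X,Y)=\mathsf{GW}_p(X,Y)=\lim_{n\to\infty}\mathsf{sPGW}_{\epsilon_n,p}(X,Y). \]
   Context: A pmm-space is a triple $(X,d_X,\mu_X)$ where $(X,d_X)$ is a complete separable metric space and $\mu_X$ a Borel probability measure; compact means $(X,d_X)$ compact. For a measure $\pi$ on $X\times Y$, $\pi_X,\pi_Y$ are its marginals. For $p<\infty$, $\|d_X-d_Y\|_{L^p(\pi\otimes\pi)}=\left(\iint|d_X(x,x')-d_Y(y,y')|^p\,d\pi(x,y)\,d\pi(x',y')\right)^{1/p}$; for $p=\infty$ it is the $\pi\otimes\pi$-essential supremum of $|d_X(x,x')-d_Y(y,y')|$. $\mathsf{GW}_p(X,Y)=\inf\|d_X-d_Y\|_{L^p(\pi\otimes\pi)}$ over Borel probability measures $\pi$ on $X\times Y$ with $\pi_X=\mu_X,\pi_Y=\mu_Y$. For $\epsilon=(\epsilon_1,\epsilon_2)$: $\mathcal{C}_\epsilon(\mu_X,\mu_Y)$ is the set of Borel probability measures $\pi$ on $X\times Y$ with $\pi_X\le(1+\epsilon_1)\mu_X$ and $\pi_Y\le(1+\epsilon_2)\mu_Y$ setwise on Borel sets; $\mathcal{S}_\epsilon(\mu_X,\mu_Y)$ is the set of Borel probability measures $\pi$ on $X\times Y$ such that $\pi_X,\mu_X$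 are mutually absolutely continuous with $\|d\pi_X/d\mu_X\|_{L^\infty(\mu_X)},\|d\mu_X/d\pi_X\|_{L^\infty(\pi_X)}\le1+\epsilon_1$, and $\pi_Y,\mu_Y$ are mutually absolutely continuous with $\|d\pi_Y/d\mu_Y\|_{L^\infty(\mu_Y)},\|d\mu_Y/d\pi_Y\|_{L^\infty(\pi_Y)}\le1+\epsilon_2$. $\mathsf{PGW}_{\epsilon,p}(X,Y)$ (resp. $\mathsf{sPGW}_{\epsilon,p}(X,Y)$) is the infimum of $\|d_X-d_Y\|_{L^p(\pi\otimes\pi)}$ over $\pi\in\mathcal{C}_\epsilon(\mu_X,\mu_Y)$ (resp. $\pi\in\mathcal{S}_\epsilon(\mu_X,\mu_Y)$). *)

theory Defs
  imports "HOL-Analysis.Analysis" "HOL-Probability.Probability"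
begin

text \<open>A pmm-space is modelled by a type of class polish_space (complete separable
metric space, metric dist) together with a Borel probability measure on it.\<close>

definition pmm_space :: "'a::polish_space measure \<Rightarrow> bool" where
  "pmm_space \<mu> \<longleftrightarrow> sets \<mu> = sets (borel :: 'a measure) \<and> prob_space \<mu>"

definition compact_pmm_space :: "'a::polish_space measure \<Rightarrow> bool" where
  "compact_pmm_space \<mu> \<longleftrightarrow> pmm_space \<mu> \<and> compact (UNIV :: 'a set)"

definition borel_prob :: "('a::polish_space \<times> 'b::polish_space) measure \<Rightarrow> bool" where
  "borel_prob \<pi> \<longleftrightarrow> sets \<pi> = sets (borel :: ('a \<times> 'b) measure) \<and> prob_space \<pi>"

definition marg1 :: "('a::polish_space \<times> 'b::polish_space) measure \<Rightarrow> 'a measure" where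
  "marg1 \<pi> = distr \<pi> borel fst"

definition marg2 :: "('a::polish_space \<times> 'b::polish_space) measure \<Rightarrow> 'b measure" where
  "marg2 \<pi> = distr \<pi> borel snd"

definition distortion :: "('a::polish_space \<times> 'b::polish_space) \<times> ('a \<times> 'b) \<Rightarrow> real" where
  "distortion z = \<bar>dist (fst (fst z)) (fst (snd z)) - dist (snd (fst z)) (snd (snd z))\<bar>"

text \<open>The L^p(pi (x) pi) norm of the distortion, for p in [1,infinity] (p :: ennreal,
p = top meaning infinity), valued in the extended reals.\<close>

definition Lp_distortion :: "('a::polish_space \<times> 'b::polish_space) measure \<Rightarrow> ennreal \<Rightarrow> ereal" where
  "Lp_distortion \<pi> p =
    (if p = \<top> then esssup (\<pi> \<Otimes>\<^sub>M \<pi>) (\<lambda>z. ereal (distortion z))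
     else (let I = (\<integral>\<^sup>+ z. ennreal (distortion z powr enn2real p) \<partial>(\<pi> \<Otimes>\<^sub>M \<pi>))
           in if I = \<top> then \<infinity> else ereal (enn2real I powr (1 / enn2real p))))"

definition couplings :: "'a::polish_space measure \<Rightarrow> 'b::polish_space measure \<Rightarrow> ('a \<times> 'b) measure set" where
  "couplings \<mu> \<nu> = {\<pi>. borel_prob \<pi> \<and> marg1 \<pi> = \<mu> \<and> marg2 \<pi> = \<nu>}"

definition GW :: "ennreal \<Rightarrow> 'a::polish_space measure \<Rightarrow> 'b::polish_space measure \<Rightarrow> ereal" where
  "GW p \<mu> \<nu> = (INF \<pi> \<in> couplings \<mu> \<nu>. Lp_distortion \<pi> p)"

definition C_eps :: "real \<times> real \<Rightarrow> 'a::polish_space measure \<Rightarrow> 'b::polish_space measure \<Rightarrow> ('a \<times> 'b) measure set" where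
  "C_eps \<epsilon> \<mu> \<nu> = {\<pi>. borel_prob \<pi> \<and>
      (\<forall>A \<in> sets (borel :: 'a measure). emeasure (marg1 \<pi>) A \<le> ennreal (1 + fst \<epsilon>) * emeasure \<mu> A) \<and>
      (\<forall>B \<in> sets (borel :: 'b measure). emeasure (marg2 \<pi>) B \<le> ennreal (1 + snd \<epsilon>) * emeasure \<nu> B)}"

text \<open>Mutual absolute continuity with both Radon-Nikodym derivatives essentially
bounded by c (the L-infinity norm bound is the a.e. bound of the RN derivative).\<close>

definition mutual_ac_bounded :: "'a measure \<Rightarrow> 'a measure \<Rightarrow> real \<Rightarrow> bool" where
  "mutual_ac_bounded \<rho> \<mu> c \<longleftrightarrow>
     absolutely_continuous \<mu> \<rho> \<and> absolutely_continuous \<rho> \<mu> \<and>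
     (AE x in \<mu>. RN_deriv \<mu> \<rho> x \<le> ennreal c) \<and>
     (AE x in \<rho>. RN_deriv \<rho> \<mu> x \<le> ennreal c)"

definition S_eps :: "real \<times> real \<Rightarrow> 'a::polish_space measure \<Rightarrow> 'b::polish_space measure \<Rightarrow> ('a \<times> 'b) measure set" where
  "S_eps \<epsilon> \<mu> \<nu> = {\<pi>. borel_prob \<pi> \<and>
      mutual_ac_bounded (marg1 \<pi>) \<mu> (1 + fst \<epsilon>) \<and>
      mutual_ac_bounded (marg2 \<pi>) \<nu> (1 + snd \<epsilon>)}"

definition PGW :: "real \<times> real \<Rightarrow> ennreal \<Rightarrow> 'a::polish_space measure \<Rightarrow> 'b::polish_space measure \<Rightarrow> ereal" where
  "PGW \<epsilon> p \<mu> \<nu> = (INF \<pi> \<in> C_eps \<epsilon> \<mu> \<nu>. Lp_distortion \<pi> p)"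

definition sPGW :: "real \<times> real \<Rightarrow> ennreal \<Rightarrow> 'a::polish_space measure \<Rightarrow> 'b::polish_space measure \<Rightarrow> ereal" where
  "sPGW \<epsilon> p \<mu> \<nu> = (INF \<pi> \<in> S_eps \<epsilon> \<mu> \<nu>. Lp_distortion \<pi> p)"

end

theory Submission
  imports Defs
begin

lemma cpmm_D:
  assumes "compact_pmm_space (\<mu>::'a::polish_space measure)"
  shows "prob_space \<mu>" "sets \<mu> = sets borel" "space \<mu> = UNIV" "compact (UNIV::'a set)"
  using assms unfolding compact_pmm_space_def pmm_space_def
  by (auto dest: sets_eq_imp_space_eq)

lemma couplings_sub_C:
  assumes "0 \<le> fst e" "0 \<le> snd e"
  shows "couplings \<mu> \<nu> \<subseteq> C_eps e \<mu> \<nu>"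
proof
  fix \<pi> assume "\<pi> \<in> couplings \<mu> \<nu>"
  then have h: "borel_prob \<pi>" "marg1 \<pi> = \<mu>" "marg2 \<pi> = \<nu>" by (auto simp: couplings_def)
  have a: "x \<le> ennreal (1 + c) * x" if "0 \<le> c" for x :: ennreal and c :: real
  proof -
    have "x = ennreal 1 * x" by simp
    also have "\<dots> \<le> ennreal (1 + c) * x" using that by (intro mult_right_mono ennreal_leI) auto
    finally show ?thesis .
  qed
  show "\<pi> \<in> C_eps e \<mu> \<nu>" using h assms a unfolding C_eps_def by auto
qed

lemma RN_deriv_self_AE:
  assumes "prob_space M"
  shows "AE x in M. RN_deriv M M x = 1"
proof -
  interpret prob_space M by fact
  have "AE x in M. (\<lambda>_. 1::ennreal) x = RN_deriv M M x"
    by (rule RN_deriv_unique) (auto simp: density_1)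
  then show ?thesis by auto
qed

lemma couplings_sub_S:
  assumes "0 \<le> fst e" "0 \<le> snd e" "prob_space \<mu>" "prob_space \<nu>"
  shows "couplings \<mu> \<nu> \<subseteq> S_eps e \<mu> \<nu>"
proof
  fix \<pi> assume "\<pi> \<in> couplings \<mu> \<nu>"
  then have h: "borel_prob \<pi>" "marg1 \<pi> = \<mu>" "marg2 \<pi> = \<nu>" by (auto simp: couplings_def)
  have m: "mutual_ac_bounded M M (1 + c)" if "prob_space M" "0 \<le> c" for M :: "'c measure" and c :: real
  proof -
    have "AE x in M. RN_deriv M M x \<le> ennreal (1 + c)"
      using RN_deriv_self_AE[OF that(1)] by eventually_elim (use that in \<open>auto simp: ennreal_ge_1\<close>)
    then show ?thesis unfolding mutual_ac_bounded_def absolutely_continuous_def by auto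
  qed
  show "\<pi> \<in> S_eps e \<mu> \<nu>" using h m[OF assms(3) assms(1)] m[OF assms(4) assms(2)] unfolding S_eps_def by auto
qed

lemma mab_le:
  assumes "mutual_ac_bounded \<rho> \<mu> c" "sets \<rho> = sets \<mu>" "prob_space \<mu>" "A \<in> sets \<mu>"
  shows "emeasure \<rho> A \<le> ennreal c * emeasure \<mu> A"
proof -
  interpret prob_space \<mu> by fact
  have ac: "absolutely_continuous \<mu> \<rho>" and ae: "AE x in \<mu>. RN_deriv \<mu> \<rho> x \<le> ennreal c"
    using assms(1) by (auto simp: mutual_ac_bounded_def)
  have "emeasure \<rho> A = emeasure (density \<mu> (RN_deriv \<mu> \<rho>)) A"
    using density_RN_deriv[OF ac assms(2)] by simp
  also have "\<dots> = (\<integral>\<^sup>+x. RN_deriv \<mu> \<rho> x * indicator A x \<partial>\<mu>)"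
    using assms(4) by (simp add: emeasure_density)
  also have "\<dots> \<le> (\<integral>\<^sup>+x. ennreal c * indicator A x \<partial>\<mu>)"
    using ae by (intro nn_integral_mono_AE) (auto elim!: eventually_mono simp: mult_right_mono split: split_indicator)
  also have "\<dots> = ennreal c * emeasure \<mu> A"
    using assms(4) by (simp add: nn_integral_cmult)
  finally show ?thesis .
qed

lemma sets_marg1: "sets (marg1 \<pi>) = sets borel" by (simp add: marg1_def)
lemma sets_marg2: "sets (marg2 \<pi>) = sets borel" by (simp add: marg2_def)

lemma S_sub_C:
  assumes "prob_space \<mu>" "prob_space \<nu>" "sets \<mu> = sets borel" "sets \<nu> = sets borel"
  shows "S_eps e \<mu> \<nu> \<subseteq> C_eps e \<mu> \<nu>"
proof
  fix \<pi> assume "\<pi> \<in> S_eps e \<mu> \<nu>"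
  then have h: "borel_prob \<pi>" "mutual_ac_bounded (marg1 \<pi>) \<mu> (1 + fst e)" "mutual_ac_bounded (marg2 \<pi>) \<nu> (1 + snd e)"
    by (auto simp: S_eps_def)
  show "\<pi> \<in> C_eps e \<mu> \<nu>" unfolding C_eps_def
    using h mab_le[OF h(2) _ assms(1)] mab_le[OF h(3) _ assms(2)] assms(3,4)
    by (auto simp: sets_marg1 sets_marg2)
qed

fun nearest :: "'a::metric_space list \<Rightarrow> real \<Rightarrow> 'a \<Rightarrow> 'a" where
  "nearest [] r x = x"
| "nearest (c#cs) r x = (if dist x c < r then c else nearest cs r x)"

lemma nearest_dist: "0 < r \<Longrightarrow> dist x (nearest cs r x) < r"
  by (induct cs) (auto simp: dist_commute)

lemma nearest_in: "\<exists>c\<in>set cs. dist x c < r \<Longrightarrow> nearest cs r x \<in> set cs"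
  by (induct cs) auto

lemma nearest_meas: "nearest cs r \<in> borel_measurable borel"
proof (induct cs)
  case Nil
  then show ?case by (simp add: measurable_ident_sets[unfolded id_def])
next
  case (Cons c cs)
  have "{x \<in> space borel. dist x c < r} = ball c r" by (auto simp: dist_commute)
  then have "{x \<in> space borel. dist x c < r} \<in> sets borel" by simp
  then have "(\<lambda>x. if dist x c < r then c else nearest cs r x) \<in> borel_measurable borel"
    using Cons by (intro measurable_If) auto
  then show ?case by simp
qed

lemma finite_cover_list:
  assumes "compact (UNIV::'a::metric_space set)" "0 < r"
  shows "\<exists>cs::'a list. \<forall>x. \<exists>c\<in>set cs. dist x c < r"
proof -
  have cov: "(UNIV::'a set) \<subseteq> (\<Union>c\<in>(UNIV::'a set). ball c r)" proof
    fix x :: 'a show "x \<in> (\<Union>c\<in>(UNIV::'a set). ball c r)" using assms(2) by (intro UN_I[of x]) auto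
  qed
  have op: "\<And>c. c \<in> (UNIV::'a set) \<Longrightarrow> open (ball c r)" by simp
  obtain C where C0: "C \<subseteq> UNIV" and C: "finite C" "(UNIV::'a set) \<subseteq> (\<Union>c\<in>C. ball c r)"
    by (rule compactE_image[OF assms(1) op cov])
  obtain cs where "set cs = C" using finite_list[OF C(1)] by blast
  then show ?thesis using C(2)
  proof (intro exI[of _ cs] allI)
    fix x :: 'a
    from C(2) obtain c where "c \<in> C" "x \<in> ball c r" by blast
    then show "\<exists>c\<in>set cs. dist x c < r" using \<open>set cs = C\<close> by (auto simp: dist_commute)
  qed
qed

lemma finite_subseq_conv:
  fixes u :: "nat \<Rightarrow> 'k \<Rightarrow> real"
  assumes "finite K" "\<And>n k. k \<in> K \<Longrightarrow> u n k \<in> {0..1}"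
  shows "\<exists>r. strict_mono r \<and> (\<forall>k\<in>K. convergent (\<lambda>n. u (r n) k))"
  using assms
proof (induct K)
  case empty
  show ?case by (rule exI[of _ id]) (auto simp: strict_mono_def)
next
  case (insert k K)
  then obtain r where r: "strict_mono r" "\<forall>k\<in>K. convergent (\<lambda>n. u (r n) k)" by auto
  have "seq_compact {0..1::real}" by (simp add: compact_imp_seq_compact)
  moreover have "\<forall>n. u (r n) k \<in> {0..1}" using insert(4) by blast
  ultimately obtain l s where s: "strict_mono s" "((\<lambda>n. u (r n) k) \<circ> s) \<longlonglongrightarrow> l"
    by (rule seq_compactE)
  have "convergent (\<lambda>n. u (r (s n)) k)" using s(2) by (auto simp: convergent_def o_def)
  moreover have "convergent (\<lambda>n. u (r (s n)) k')" if "k' \<in> K" for k'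
  proof -
    from r(2) that obtain l' where "(\<lambda>n. u (r n) k') \<longlonglongrightarrow> l'" by (auto simp: convergent_def)
    from LIMSEQ_subseq_LIMSEQ[OF this s(1)] show ?thesis by (auto simp: convergent_def o_def)
  qed
  moreover have "strict_mono (\<lambda>n. r (s n))" using strict_mono_o[OF r(1) s(1)] by (simp add: o_def)
  ultimately show ?case by (intro exI[of _ "\<lambda>n. r (s n)"]) auto
qed

lemma sets_prod_borel:
  assumes "sets \<rho> = sets (borel::'a::second_countable_topology measure)"
      and "sets \<sigma> = sets (borel::'b::second_countable_topology measure)"
  shows "sets (\<rho> \<Otimes>\<^sub>M \<sigma>) = sets (borel::('a \<times> 'b) measure)"
  using sets_pair_measure_cong[OF assms] by (simp only: borel_prod)

lemma snd_borel: "snd \<in> borel_measurable (borel::('a::topological_space \<times> 'b::topological_space) measure)"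
  by (intro borel_measurable_continuous_onI continuous_intros)

lemma fst_borel: "fst \<in> borel_measurable (borel::('a::topological_space \<times> 'b::topological_space) measure)"
  by (intro borel_measurable_continuous_onI continuous_intros)

lemma map_pair_borel:
  fixes f :: "'a::second_countable_topology \<Rightarrow> 'c::second_countable_topology"
    and g :: "'b::second_countable_topology \<Rightarrow> 'd::second_countable_topology"
  assumes "f \<in> borel_measurable borel" "g \<in> borel_measurable borel"
  shows "(\<lambda>z. (f (fst z), g (snd z))) \<in> borel_measurable borel"
proof -
  have "(\<lambda>z. f (fst z)) \<in> borel_measurable borel"
    using measurable_compose[OF fst_borel assms(1)] by (simp add: o_def)
  moreover have "(\<lambda>z. g (snd z)) \<in> borel_measurable borel"
    using measurable_compose[OF snd_borel assms(2)] by (simp add: o_def)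
  ultimately have "(\<lambda>z. (f (fst z), g (snd z))) \<in> (borel::('a \<times> 'b) measure) \<rightarrow>\<^sub>M borel \<Otimes>\<^sub>M borel"
    by (rule measurable_Pair)
  then show ?thesis by (simp only: borel_prod)
qed

lemma space_borel_eq: "sets \<rho> = sets (borel::'a::topological_space measure) \<Longrightarrow> space \<rho> = UNIV"
  by (metis sets_eq_imp_space_eq space_borel)

lemma sum_fibers:
  assumes "finite_measure M" "space M = UNIV" "finite K" "\<And>x. g x \<in> K"
    "\<And>k. k \<in> K \<Longrightarrow> g -` {k} \<in> sets M" "A \<in> sets M"
  shows "(\<Sum>k\<in>K. measure M (A \<inter> g -` {k})) = measure M A"
proof -
  interpret finite_measure M by fact
  have "measure M (\<Union>k\<in>K. A \<inter> g -` {k}) = (\<Sum>k\<in>K. measure M (A \<inter> g -` {k}))"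
    using assms by (intro finite_measure_finite_Union) (auto simp: disjoint_family_on_def)
  moreover have "(\<Union>k\<in>K. A \<inter> g -` {k}) = A" using assms(4) by auto
  ultimately show ?thesis by simp
qed

locale cells =
  fixes cX :: "'a::polish_space \<Rightarrow> 'a" and cY :: "'b::polish_space \<Rightarrow> 'b"
    and KX :: "'a set" and KY :: "'b set"
  assumes finKX: "finite KX" and finKY: "finite KY"
    and cX_in: "\<And>x. cX x \<in> KX" and cY_in: "\<And>y. cY y \<in> KY"
    and cX_meas: "cX \<in> borel_measurable borel" and cY_meas: "cY \<in> borel_measurable borel"
begin

definition cellX :: "'a \<Rightarrow> 'a set" where "cellX a = cX -` {a}"
definition cellY :: "'b \<Rightarrow> 'b set" where "cellY b = cY -` {b}"
definition cell :: "'a \<times> 'b \<Rightarrow> ('a \<times> 'b) set" where "cell k = cellX (fst k) \<times> cellY (snd k)"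
definition cc :: "'a \<times> 'b \<Rightarrow> 'a \<times> 'b" where "cc z = (cX (fst z), cY (snd z))"

lemma cc_meas: "cc \<in> borel_measurable borel"
  unfolding cc_def[abs_def] using cX_meas cY_meas by (rule map_pair_borel)

lemma finK: "finite (KX \<times> KY)" using finKX finKY by simp
lemma cc_in: "cc z \<in> KX \<times> KY" using cX_in cY_in by (simp add: cc_def)

lemma cell_iff: "z \<in> cell k \<longleftrightarrow> cc z = k"
  by (cases z; cases k) (simp add: cell_def cellX_def cellY_def cc_def)

lemma cell_vimage: "cell k = cc -` {k}" unfolding set_eq_iff by (simp add: cell_iff)

lemma cellX_borel: "cellX a \<in> sets borel"
proof -
  have "cX -` {a} \<inter> space borel \<in> sets borel" using cX_meas by (rule measurable_sets) simp
  then show ?thesis by (simp add: cellX_def)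
qed

lemma cellY_borel: "cellY b \<in> sets borel"
proof -
  have "cY -` {b} \<inter> space borel \<in> sets borel" using cY_meas by (rule measurable_sets) simp
  then show ?thesis by (simp add: cellY_def)
qed

lemma cell_borel: "cell k \<in> sets borel"
proof -
  have "cellX (fst k) \<times> cellY (snd k) \<in> sets (borel \<Otimes>\<^sub>M borel)"
    using cellX_borel cellY_borel by (rule pair_measureI)
  then show ?thesis by (simp only: cell_def borel_prod)
qed

definition w :: "('a \<times> 'b) measure \<Rightarrow> 'a \<times> 'b \<Rightarrow> real" where "w \<rho> k = measure \<rho> (cell k)"

lemma sum_w:
  assumes "borel_prob \<rho>"
  shows "(\<Sum>k\<in>KX \<times> KY. w \<rho> k) = 1"
proof -
  have s: "sets \<rho> = sets borel" and p: "prob_space \<rho>" using assms by (auto simp: borel_prob_def)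
  interpret prob_space \<rho> by fact
  have "(\<Sum>k\<in>KX \<times> KY. measure \<rho> (UNIV \<inter> cc -` {k})) = measure \<rho> UNIV"
    using s cell_borel finK cc_in
    by (intro sum_fibers) (auto simp: space_borel_eq cell_vimage[symmetric] finite_measure_axioms)
  then show ?thesis using prob_space space_borel_eq[OF s] by (simp add: w_def cell_vimage)
qed

lemma w_nonneg: "0 \<le> w \<rho> k" by (simp add: w_def)

lemma row_sum:
  assumes "borel_prob \<rho>"
  shows "(\<Sum>b\<in>KY. w \<rho> (a, b)) = measure (marg1 \<rho>) (cellX a)"
proof -
  have s: "sets \<rho> = sets borel" and p: "prob_space \<rho>" using assms by (auto simp: borel_prob_def)
  interpret prob_space \<rho> by fact
  have "cellX a \<times> UNIV \<in> sets (borel \<Otimes>\<^sub>M borel)"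
    by (rule pair_measureI[OF cellX_borel]) simp
  then have A: "cellX a \<times> UNIV \<in> sets \<rho>" using s by (metis borel_prod)
  have m: "(\<lambda>z. cY (snd z)) \<in> borel_measurable borel" using measurable_compose[OF snd_borel cY_meas] by (simp add: o_def)
  have "(\<Sum>b\<in>KY. measure \<rho> ((cellX a \<times> UNIV) \<inter> (\<lambda>z. cY (snd z)) -` {b})) = measure \<rho> (cellX a \<times> UNIV)"
  proof (rule sum_fibers)
    show "finite_measure \<rho>" by (rule finite_measure_axioms)
    show "space \<rho> = UNIV" using s by (rule space_borel_eq)
    fix b assume "b \<in> KY"
    have "(\<lambda>z. cY (snd z)) -` {b} \<inter> space borel \<in> sets borel" using m by (rule measurable_sets) simp
    then show "(\<lambda>z. cY (snd z)) -` {b} \<in> sets \<rho>" using s by simp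
  qed (use finKY cY_in A in auto)
  moreover have "(cellX a \<times> UNIV) \<inter> (\<lambda>z. cY (snd z)) -` {b} = cell (a, b)" for b
    by (auto simp: cell_def cellY_def)
  moreover have "measure \<rho> (cellX a \<times> UNIV) = measure (marg1 \<rho>) (cellX a)"
  proof -
    have "fst \<in> measurable \<rho> borel" using fst_borel measurable_cong_sets[OF s refl] by blast
    then have "measure (marg1 \<rho>) (cellX a) = measure \<rho> (fst -` cellX a \<inter> space \<rho>)"
      unfolding marg1_def using cellX_borel by (intro measure_distr) auto
    also have "fst -` cellX a \<inter> space \<rho> = cellX a \<times> UNIV" using space_borel_eq[OF s] by auto
    finally show ?thesis by simp
  qed
  ultimately show ?thesis by (simp add: w_def)
qed

lemma col_sum:
  assumes "borel_prob \<rho>"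
  shows "(\<Sum>a\<in>KX. w \<rho> (a, b)) = measure (marg2 \<rho>) (cellY b)"
proof -
  have s: "sets \<rho> = sets borel" and p: "prob_space \<rho>" using assms by (auto simp: borel_prob_def)
  interpret prob_space \<rho> by fact
  have "UNIV \<times> cellY b \<in> sets (borel \<Otimes>\<^sub>M borel)"
    by (rule pair_measureI[OF _ cellY_borel]) simp
  then have A: "UNIV \<times> cellY b \<in> sets \<rho>" using s by (metis borel_prod)
  have m: "(\<lambda>z. cX (fst z)) \<in> borel_measurable borel" using measurable_compose[OF fst_borel cX_meas] by (simp add: o_def)
  have "(\<Sum>a\<in>KX. measure \<rho> ((UNIV \<times> cellY b) \<inter> (\<lambda>z. cX (fst z)) -` {a})) = measure \<rho> (UNIV \<times> cellY b)"
  proof (rule sum_fibers)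
    show "finite_measure \<rho>" by (rule finite_measure_axioms)
    show "space \<rho> = UNIV" using s by (rule space_borel_eq)
    fix a assume "a \<in> KX"
    have "(\<lambda>z. cX (fst z)) -` {a} \<inter> space borel \<in> sets borel" using m by (rule measurable_sets) simp
    then show "(\<lambda>z. cX (fst z)) -` {a} \<in> sets \<rho>" using s by simp
  qed (use finKX cX_in A in auto)
  moreover have "(UNIV \<times> cellY b) \<inter> (\<lambda>z. cX (fst z)) -` {a} = cell (a, b)" for a
    by (auto simp: cell_def cellX_def)
  moreover have "measure \<rho> (UNIV \<times> cellY b) = measure (marg2 \<rho>) (cellY b)"
  proof -
    have "snd \<in> measurable \<rho> borel" using snd_borel measurable_cong_sets[OF s refl] by blast
    then have "measure (marg2 \<rho>) (cellY b) = measure \<rho> (snd -` cellY b \<inter> space \<rho>)"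
      unfolding marg2_def using cellY_borel by (intro measure_distr) auto
    also have "snd -` cellY b \<inter> space \<rho> = UNIV \<times> cellY b" using space_borel_eq[OF s] by auto
    finally show ?thesis by simp
  qed
  ultimately show ?thesis by (simp add: w_def)
qed

end

locale cellsF = cells cX cY KX KY
  for cX :: "'a::polish_space \<Rightarrow> 'a" and cY :: "'b::polish_space \<Rightarrow> 'b" and KX KY +
  fixes F :: "('a \<times> 'b) \<times> ('a \<times> 'b) \<Rightarrow> real" and \<omega> :: real
  assumes F_meas: "F \<in> borel_measurable borel" and F_nonneg: "\<And>v. 0 \<le> F v"
    and F_close: "\<And>z z'. \<bar>F (z, z') - F (cc z, cc z')\<bar> < \<omega>"
begin

lemma omega_pos: "0 < \<omega>" using F_close[of undefined undefined] by linarith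

definition S :: "('a \<times> 'b \<Rightarrow> real) \<Rightarrow> real" where
  "S u = (\<Sum>k\<in>KX \<times> KY. \<Sum>l\<in>KX \<times> KY. F (k, l) * u k * u l)"

lemma S_nonneg: "(\<And>k. 0 \<le> u k) \<Longrightarrow> 0 \<le> S u"
  unfolding S_def by (intro sum_nonneg mult_nonneg_nonneg F_nonneg) auto

lemma bp_D:
  assumes "borel_prob \<rho>"
  shows "sets \<rho> = sets borel" "prob_space \<rho>" "space \<rho> = UNIV"
    "sets (\<rho> \<Otimes>\<^sub>M \<rho>) = sets borel" "prob_space (\<rho> \<Otimes>\<^sub>M \<rho>)"
    "space (\<rho> \<Otimes>\<^sub>M \<rho>) = UNIV"
proof -
  show s: "sets \<rho> = sets borel" and p: "prob_space \<rho>" using assms by (auto simp: borel_prob_def)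
  show "space \<rho> = UNIV" using s by (rule space_borel_eq)
  show s2: "sets (\<rho> \<Otimes>\<^sub>M \<rho>) = sets borel" using s s by (rule sets_prod_borel)
  show "prob_space (\<rho> \<Otimes>\<^sub>M \<rho>)" using p p by (rule prob_space_pair)
  show "space (\<rho> \<Otimes>\<^sub>M \<rho>) = UNIV" using s2 by (rule space_borel_eq)
qed

lemma F_meas_rho: "borel_prob \<rho> \<Longrightarrow> F \<in> borel_measurable (\<rho> \<Otimes>\<^sub>M \<rho>)"
  using F_meas measurable_cong_sets[OF bp_D(4) refl] by blast

lemma G_meas: "(\<lambda>v. F (cc (fst v), cc (snd v))) \<in> borel_measurable borel"
  using measurable_compose[OF map_pair_borel[OF cc_meas cc_meas] F_meas] by (simp add: o_def)

lemma G_meas_rho: "borel_prob \<rho> \<Longrightarrow> (\<lambda>v. F (cc (fst v), cc (snd v))) \<in> borel_measurable (\<rho> \<Otimes>\<^sub>M \<rho>)"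
  using G_meas measurable_cong_sets[OF bp_D(4) refl] by blast

lemma G_integral:
  assumes "borel_prob \<rho>"
  shows "(\<integral>\<^sup>+v. ennreal (F (cc (fst v), cc (snd v))) \<partial>(\<rho> \<Otimes>\<^sub>M \<rho>)) = ennreal (S (w \<rho>))"
proof -
  note D = bp_D[OF assms]
  interpret prob_space \<rho> by (rule D(2))
  have cs: "cell k \<in> sets \<rho>" for k using D(1) cell_borel by simp
  have cs2: "cell k \<times> cell l \<in> sets (\<rho> \<Otimes>\<^sub>M \<rho>)" for k l using cs cs by (rule pair_measureI)
  have pt: "ennreal (F (cc (fst v), cc (snd v))) =
      (\<Sum>k\<in>KX \<times> KY. \<Sum>l\<in>KX \<times> KY. ennreal (F (k,l)) * indicator (cell k \<times> cell l) v)" for v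
  proof -
    have "(\<Sum>k\<in>KX \<times> KY. \<Sum>l\<in>KX \<times> KY. ennreal (F (k,l)) * indicator (cell k \<times> cell l) v) =
        (\<Sum>k\<in>KX \<times> KY. if k = cc (fst v) then (\<Sum>l\<in>KX \<times> KY. if l = cc (snd v) then ennreal (F (k,l)) else 0) else 0)"
    proof (intro sum.cong refl)
      fix k
      have ind: "indicator (cell k \<times> cell l) v = (if k = cc (fst v) then if l = cc (snd v) then 1 else 0 else 0 :: ennreal)" for l
        by (cases v) (auto simp: indicator_def cell_iff)
      show "(\<Sum>l\<in>KX \<times> KY. ennreal (F (k,l)) * indicator (cell k \<times> cell l) v) =
        (if k = cc (fst v) then (\<Sum>l\<in>KX \<times> KY. if l = cc (snd v) then ennreal (F (k,l)) else 0) else 0)"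
      proof (cases "k = cc (fst v)")
        case True
        then show ?thesis unfolding ind by (simp, intro sum.cong refl) auto
      qed (simp add: ind)
    qed
    also have "\<dots> = ennreal (F (cc (fst v), cc (snd v)))"
      using cc_in finKX finKY by (simp add: sum.delta)
    finally show ?thesis by simp
  qed
  have "(\<integral>\<^sup>+v. ennreal (F (cc (fst v), cc (snd v))) \<partial>(\<rho> \<Otimes>\<^sub>M \<rho>)) =
      (\<Sum>k\<in>KX \<times> KY. \<Sum>l\<in>KX \<times> KY. ennreal (F (k,l)) * emeasure (\<rho> \<Otimes>\<^sub>M \<rho>) (cell k \<times> cell l))"
    unfolding pt using cs2
    by (simp add: nn_integral_sum nn_integral_cmult_indicator)
  also have "\<dots> = (\<Sum>k\<in>KX \<times> KY. \<Sum>l\<in>KX \<times> KY. ennreal (F (k,l) * w \<rho> k * w \<rho> l))"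
    using cs
    by (intro sum.cong refl)
       (simp add: emeasure_pair_measure_Times emeasure_eq_measure w_def ennreal_mult'' F_nonneg mult.assoc)
  also have "\<dots> = ennreal (S (w \<rho>))"
    unfolding S_def by (simp add: F_nonneg w_nonneg sum_nonneg)
  finally show ?thesis .
qed

lemma I_upper:
  assumes "borel_prob \<rho>"
  shows "(\<integral>\<^sup>+v. ennreal (F v) \<partial>(\<rho> \<Otimes>\<^sub>M \<rho>)) \<le> ennreal (S (w \<rho>) + \<omega>)"
proof -
  note D = bp_D[OF assms]
  interpret p2: prob_space "\<rho> \<Otimes>\<^sub>M \<rho>" by (rule D(5))
  have mG: "(\<lambda>v. ennreal (F (cc (fst v), cc (snd v)))) \<in> borel_measurable (\<rho> \<Otimes>\<^sub>M \<rho>)"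
    using G_meas_rho[OF assms] by simp
  have "(\<integral>\<^sup>+v. ennreal (F v) \<partial>(\<rho> \<Otimes>\<^sub>M \<rho>)) \<le> (\<integral>\<^sup>+v. ennreal (F (cc (fst v), cc (snd v))) + ennreal \<omega> \<partial>(\<rho> \<Otimes>\<^sub>M \<rho>))"
  proof (intro nn_integral_mono)
    fix v :: "('a \<times> 'b) \<times> ('a \<times> 'b)"
    have "F v \<le> F (cc (fst v), cc (snd v)) + \<omega>" using F_close[of "fst v" "snd v"] by auto
    then show "ennreal (F v) \<le> ennreal (F (cc (fst v), cc (snd v))) + ennreal \<omega>"
      using omega_pos F_nonneg by (simp add: ennreal_plus[symmetric] del: ennreal_plus)
  qed
  also have "\<dots> = ennreal (S (w \<rho>)) + ennreal \<omega>"
    using mG G_integral[OF assms] p2.emeasure_space_1 by (simp add: nn_integral_add)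
  also have "\<dots> = ennreal (S (w \<rho>) + \<omega>)"
    using omega_pos S_nonneg[OF w_nonneg] by (simp add: ennreal_plus)
  finally show ?thesis .
qed


lemma I_lower:
  assumes "borel_prob \<rho>"
  shows "ennreal (S (w \<rho>)) \<le> (\<integral>\<^sup>+v. ennreal (F v) \<partial>(\<rho> \<Otimes>\<^sub>M \<rho>)) + ennreal \<omega>"
proof -
  note D = bp_D[OF assms]
  interpret p2: prob_space "\<rho> \<Otimes>\<^sub>M \<rho>" by (rule D(5))
  have mF: "(\<lambda>v. ennreal (F v)) \<in> borel_measurable (\<rho> \<Otimes>\<^sub>M \<rho>)"
    using F_meas_rho[OF assms] by simp
  have "ennreal (S (w \<rho>)) = (\<integral>\<^sup>+v. ennreal (F (cc (fst v), cc (snd v))) \<partial>(\<rho> \<Otimes>\<^sub>M \<rho>))"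
    using G_integral[OF assms] by simp
  also have "\<dots> \<le> (\<integral>\<^sup>+v. ennreal (F v) + ennreal \<omega> \<partial>(\<rho> \<Otimes>\<^sub>M \<rho>))"
  proof (intro nn_integral_mono)
    fix v :: "('a \<times> 'b) \<times> ('a \<times> 'b)"
    have "F (cc (fst v), cc (snd v)) \<le> F v + \<omega>" using F_close[of "fst v" "snd v"] by auto
    then show "ennreal (F (cc (fst v), cc (snd v))) \<le> ennreal (F v) + ennreal \<omega>"
      using omega_pos F_nonneg by (simp add: ennreal_plus[symmetric] del: ennreal_plus)
  qed
  also have "\<dots> = (\<integral>\<^sup>+v. ennreal (F v) \<partial>(\<rho> \<Otimes>\<^sub>M \<rho>)) + ennreal \<omega>"
    using mF p2.emeasure_space_1 by (simp add: nn_integral_add)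
  finally show ?thesis .
qed

lemma E1:
  assumes "borel_prob \<rho>" "0 < w \<rho> k" "0 < w \<rho> l"
  shows "ereal (F (k, l) - \<omega>) \<le> esssup (\<rho> \<Otimes>\<^sub>M \<rho>) (\<lambda>v. ereal (F v))"
proof (rule ccontr)
  note D = bp_D[OF assms(1)]
  interpret prob_space \<rho> by (rule D(2))
  assume "\<not> ?thesis"
  then have lt: "esssup (\<rho> \<Otimes>\<^sub>M \<rho>) (\<lambda>v. ereal (F v)) < ereal (F (k, l) - \<omega>)" by simp
  have "AE v in \<rho> \<Otimes>\<^sub>M \<rho>. ereal (F v) \<le> esssup (\<rho> \<Otimes>\<^sub>M \<rho>) (\<lambda>v. ereal (F v))"
    by (rule esssup_AE)
  then have ae: "AE v in \<rho> \<Otimes>\<^sub>M \<rho>. v \<notin> cell k \<times> cell l"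
  proof (rule eventually_mono)
    fix v assume "ereal (F v) \<le> esssup (\<rho> \<Otimes>\<^sub>M \<rho>) (\<lambda>v. ereal (F v))"
    with lt have "ereal (F v) < ereal (F (k, l) - \<omega>)" by (rule order.strict_trans1[rotated])
    then have "F v < F (k, l) - \<omega>" by simp
    moreover have "v \<in> cell k \<times> cell l \<Longrightarrow> F (k, l) - \<omega> < F v"
      using F_close[of "fst v" "snd v"] by (cases v) (auto simp: cell_iff)
    ultimately show "v \<notin> cell k \<times> cell l" by auto
  qed
  have cs: "cell k \<in> sets \<rho>" "cell l \<in> sets \<rho>" using D(1) cell_borel by auto
  have "cell k \<times> cell l \<in> sets (\<rho> \<Otimes>\<^sub>M \<rho>)" using cs by (rule pair_measureI)
  then have "emeasure (\<rho> \<Otimes>\<^sub>M \<rho>) (cell k \<times> cell l) = 0"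
    using ae D(6) by (subst (asm) AE_iff_measurable[OF _ refl]) (auto simp: Collect_neg_eq[symmetric] Compl_eq_Diff_UNIV[symmetric])
  moreover have "emeasure (\<rho> \<Otimes>\<^sub>M \<rho>) (cell k \<times> cell l) = ennreal (w \<rho> k * w \<rho> l)"
    using cs by (simp add: emeasure_pair_measure_Times emeasure_eq_measure w_def ennreal_mult'')
  ultimately show False using assms(2,3) by simp
qed

lemma E2:
  assumes "borel_prob \<rho>"
    and le: "\<And>k l. k \<in> KX \<times> KY \<Longrightarrow> l \<in> KX \<times> KY \<Longrightarrow> 0 < w \<rho> k \<Longrightarrow> 0 < w \<rho> l \<Longrightarrow> F (k, l) \<le> t"
  shows "esssup (\<rho> \<Otimes>\<^sub>M \<rho>) (\<lambda>v. ereal (F v)) \<le> ereal (t + \<omega>)"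
proof (rule esssup_I)
  note D = bp_D[OF assms(1)]
  interpret prob_space \<rho> by (rule D(2))
  show "(\<lambda>v. ereal (F v)) \<in> borel_measurable (\<rho> \<Otimes>\<^sub>M \<rho>)" using F_meas_rho[OF assms(1)] by simp
  have cs: "cell k \<in> sets \<rho>" for k using D(1) cell_borel by auto
  have null1: "AE v in \<rho> \<Otimes>\<^sub>M \<rho>. fst v \<notin> cell k" if "w \<rho> k = 0" for k
  proof -
    have "cell k \<times> space \<rho> \<in> sets (\<rho> \<Otimes>\<^sub>M \<rho>)" by (rule pair_measureI[OF cs sets.top])
    then have "cell k \<times> UNIV \<in> sets (\<rho> \<Otimes>\<^sub>M \<rho>)" using D(3) by simp
    moreover have "emeasure (\<rho> \<Otimes>\<^sub>M \<rho>) (cell k \<times> UNIV) = 0"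
      using cs that D(3) sets.top[of \<rho>]
      by (simp add: emeasure_pair_measure_Times emeasure_eq_measure w_def)
    ultimately have "AE v in \<rho> \<Otimes>\<^sub>M \<rho>. v \<notin> cell k \<times> UNIV" by (intro AE_not_in) auto
    then show ?thesis by (rule eventually_mono) auto
  qed
  have null2: "AE v in \<rho> \<Otimes>\<^sub>M \<rho>. snd v \<notin> cell k" if "w \<rho> k = 0" for k
  proof -
    have "space \<rho> \<times> cell k \<in> sets (\<rho> \<Otimes>\<^sub>M \<rho>)" by (rule pair_measureI[OF sets.top cs])
    then have "UNIV \<times> cell k \<in> sets (\<rho> \<Otimes>\<^sub>M \<rho>)" using D(3) by simp
    moreover have "emeasure (\<rho> \<Otimes>\<^sub>M \<rho>) (UNIV \<times> cell k) = 0"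
      using cs that D(3) sets.top[of \<rho>]
      by (simp add: emeasure_pair_measure_Times emeasure_eq_measure w_def)
    ultimately have "AE v in \<rho> \<Otimes>\<^sub>M \<rho>. v \<notin> UNIV \<times> cell k" by (intro AE_not_in) auto
    then show ?thesis by (rule eventually_mono) auto
  qed
  have "AE v in \<rho> \<Otimes>\<^sub>M \<rho>. \<forall>k\<in>{k\<in>KX \<times> KY. w \<rho> k = 0}. fst v \<notin> cell k \<and> snd v \<notin> cell k"
    using finK null1 null2 by (subst AE_finite_all) (auto intro: AE_conjI)
  then show "AE v in \<rho> \<Otimes>\<^sub>M \<rho>. ereal (F v) \<le> ereal (t + \<omega>)"
  proof (rule eventually_mono)
    fix v assume h: "\<forall>k\<in>{k\<in>KX \<times> KY. w \<rho> k = 0}. fst v \<notin> cell k \<and> snd v \<notin> cell k"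
    have "w \<rho> (cc (fst v)) \<noteq> 0"
    proof
      assume "w \<rho> (cc (fst v)) = 0"
      then have "cc (fst v) \<in> {k\<in>KX \<times> KY. w \<rho> k = 0}" using cc_in by auto
      from bspec[OF h this] have "fst v \<notin> cell (cc (fst v))" by simp
      then show False by (simp add: cell_iff)
    qed
    then have p1: "0 < w \<rho> (cc (fst v))" using w_nonneg[of \<rho> "cc (fst v)"] by linarith
    have "w \<rho> (cc (snd v)) \<noteq> 0"
    proof
      assume "w \<rho> (cc (snd v)) = 0"
      then have "cc (snd v) \<in> {k\<in>KX \<times> KY. w \<rho> k = 0}" using cc_in by auto
      from bspec[OF h this] have "snd v \<notin> cell (cc (snd v))" by simp
      then show False by (simp add: cell_iff)
    qed
    then have p2: "0 < w \<rho> (cc (snd v))" using w_nonneg[of \<rho> "cc (snd v)"] by linarith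
    have "F (cc (fst v), cc (snd v)) \<le> t" using le[OF cc_in cc_in p1 p2] .
    moreover have "F v < F (cc (fst v), cc (snd v)) + \<omega>" using F_close[of "fst v" "snd v"] by auto
    ultimately show "ereal (F v) \<le> ereal (t + \<omega>)" by simp
  qed
qed

end

lemma row_identity:
  fixes P :: "'x \<times> 'y \<Rightarrow> real"
  assumes "finite KY"
    and Pnn: "\<And>a b. a \<in> KX \<Longrightarrow> b \<in> KY \<Longrightarrow> 0 \<le> P (a, b)"
    and rows: "\<And>a. a \<in> KX \<Longrightarrow> (\<Sum>b\<in>KY. P (a, b)) = \<alpha> a"
    and cols: "\<And>b. b \<in> KY \<Longrightarrow> (\<Sum>a\<in>KX. P (a, b)) = \<beta> b"
    and "finite KX"
    and m: "\<And>a. a \<in> KX \<Longrightarrow> 0 \<le> m a \<and> m a \<le> \<alpha> a"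
  shows "(\<Sum>a\<in>KX. \<Sum>b\<in>KY. P (a, b) / (\<alpha> a * \<beta> b) * m a * \<beta> b) = (\<Sum>a\<in>KX. m a)"
proof (intro sum.cong refl)
  fix a assume a: "a \<in> KX"
  have "P (a, b) / (\<alpha> a * \<beta> b) * m a * \<beta> b = P (a, b) * m a / \<alpha> a" if b: "b \<in> KY" for b
  proof (cases "\<beta> b = 0")
    case True
    have "P (a, b) \<le> (\<Sum>a\<in>KX. P (a, b))" using a b Pnn \<open>finite KX\<close> by (intro member_le_sum) auto
    then have "P (a, b) = 0" using True cols[OF b] Pnn[OF a b] by simp
    then show ?thesis by simp
  qed simp
  then have "(\<Sum>b\<in>KY. P (a, b) / (\<alpha> a * \<beta> b) * m a * \<beta> b) = (\<Sum>b\<in>KY. P (a, b)) * m a / \<alpha> a"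
    by (simp add: sum_distrib_right sum_divide_distrib)
  also have "\<dots> = m a" using rows[OF a] m[OF a] by (cases "\<alpha> a = 0") auto
  finally show "(\<Sum>b\<in>KY. P (a, b) / (\<alpha> a * \<beta> b) * m a * \<beta> b) = m a" .
qed

locale construction = cells cX cY KX KY
  for cX :: "'a::polish_space \<Rightarrow> 'a" and cY :: "'b::polish_space \<Rightarrow> 'b" and KX KY +
  fixes \<mu>X :: "'a measure" and \<mu>Y :: "'b measure" and P :: "'a \<times> 'b \<Rightarrow> real"
  assumes sX: "sets \<mu>X = sets borel" and pX: "prob_space \<mu>X"
    and sY: "sets \<mu>Y = sets borel" and pY: "prob_space \<mu>Y"
    and Pnn: "\<And>a b. a \<in> KX \<Longrightarrow> b \<in> KY \<Longrightarrow> 0 \<le> P (a, b)"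
    and rows: "\<And>a. a \<in> KX \<Longrightarrow> (\<Sum>b\<in>KY. P (a, b)) = measure \<mu>X (cellX a)"
    and cols: "\<And>b. b \<in> KY \<Longrightarrow> (\<Sum>a\<in>KX. P (a, b)) = measure \<mu>Y (cellY b)"
begin

definition \<alpha> where "\<alpha> a = measure \<mu>X (cellX a)"
definition \<beta> where "\<beta> b = measure \<mu>Y (cellY b)"
definition c where "c k = P k / (\<alpha> (fst k) * \<beta> (snd k))"
definition h where "h z = (\<Sum>k\<in>KX \<times> KY. ennreal (c k) * indicator (cell k) z)"
definition \<pi> where "\<pi> = density (\<mu>X \<Otimes>\<^sub>M \<mu>Y) h"

lemma c_nonneg: "a \<in> KX \<Longrightarrow> b \<in> KY \<Longrightarrow> 0 \<le> c (a, b)"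
  using Pnn by (simp add: c_def \<alpha>_def \<beta>_def)

lemma sets_XY: "sets (\<mu>X \<Otimes>\<^sub>M \<mu>Y) = sets borel" using sX sY by (rule sets_prod_borel)

lemma sets_pi: "sets \<pi> = sets borel" by (simp add: \<pi>_def sets_XY)

lemma space_pi: "space \<pi> = UNIV" using sets_pi by (rule space_borel_eq)

lemma h_meas: "h \<in> borel_measurable (\<mu>X \<Otimes>\<^sub>M \<mu>Y)"
proof -
  have "cell k \<in> sets (\<mu>X \<Otimes>\<^sub>M \<mu>Y)" for k using sets_XY cell_borel by simp
  then show ?thesis unfolding h_def[abs_def] by measurable
qed

lemma emeasure_pi_Times:
  assumes A: "A \<in> sets borel" and B: "B \<in> sets borel"
  shows "emeasure \<pi> (A \<times> B) =
    ennreal (\<Sum>a\<in>KX. \<Sum>b\<in>KY. c (a, b) * measure \<mu>X (A \<inter> cellX a) * measure \<mu>Y (B \<inter> cellY b))"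
proof -
  interpret X: prob_space \<mu>X by (rule pX)
  interpret Y: prob_space \<mu>Y by (rule pY)
  interpret XY: pair_sigma_finite \<mu>X \<mu>Y by unfold_locales
  have AB: "A \<times> B \<in> sets (\<mu>X \<Otimes>\<^sub>M \<mu>Y)" using A B sX sY by (intro pair_measureI) auto
  have sAX: "A \<inter> cellX a \<in> sets \<mu>X" for a using A cellX_borel sX by auto
  have sBY: "B \<inter> cellY b \<in> sets \<mu>Y" for b using B cellY_borel sY by auto
  have ind: "h z * indicator (A \<times> B) z =
      (\<Sum>k\<in>KX \<times> KY. ennreal (c k) * indicator ((A \<inter> cellX (fst k)) \<times> (B \<inter> cellY (snd k))) z)" for z
    unfolding h_def sum_distrib_right
    by (intro sum.cong refl) (auto simp: indicator_def cell_def)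
  have "emeasure \<pi> (A \<times> B) = (\<integral>\<^sup>+z. h z * indicator (A \<times> B) z \<partial>(\<mu>X \<Otimes>\<^sub>M \<mu>Y))"
    unfolding \<pi>_def using AB h_meas by (simp add: emeasure_density)
  also have "\<dots> = (\<Sum>k\<in>KX \<times> KY. ennreal (c k) * emeasure (\<mu>X \<Otimes>\<^sub>M \<mu>Y) ((A \<inter> cellX (fst k)) \<times> (B \<inter> cellY (snd k))))"
    unfolding ind using sAX sBY
    by (subst nn_integral_sum) (auto intro!: sum.cong nn_integral_cmult_indicator pair_measureI)
  also have "\<dots> = (\<Sum>k\<in>KX \<times> KY. ennreal (c k * measure \<mu>X (A \<inter> cellX (fst k)) * measure \<mu>Y (B \<inter> cellY (snd k))))"
    using sAX sBY c_nonneg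
    by (intro sum.cong refl)
       (auto simp: Y.emeasure_pair_measure_Times X.emeasure_eq_measure Y.emeasure_eq_measure ennreal_mult'' mult.assoc)
  also have "\<dots> = ennreal (\<Sum>k\<in>KX \<times> KY. c k * measure \<mu>X (A \<inter> cellX (fst k)) * measure \<mu>Y (B \<inter> cellY (snd k)))"
    using c_nonneg by (intro sum_ennreal) auto
  also have "(\<Sum>k\<in>KX \<times> KY. c k * measure \<mu>X (A \<inter> cellX (fst k)) * measure \<mu>Y (B \<inter> cellY (snd k))) =
      (\<Sum>a\<in>KX. \<Sum>b\<in>KY. c (a, b) * measure \<mu>X (A \<inter> cellX a) * measure \<mu>Y (B \<inter> cellY b))"
    by (simp add: sum.cartesian_product split_beta)
  finally show ?thesis .
qed


lemma alpha_nonneg: "0 \<le> \<alpha> a" by (simp add: \<alpha>_def)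
lemma beta_nonneg: "0 \<le> \<beta> b" by (simp add: \<beta>_def)

lemma R_UNIV2:
  assumes A: "A \<in> sets borel"
  shows "(\<Sum>a\<in>KX. \<Sum>b\<in>KY. c (a, b) * measure \<mu>X (A \<inter> cellX a) * measure \<mu>Y (UNIV \<inter> cellY b)) = measure \<mu>X A"
proof -
  interpret X: prob_space \<mu>X by (rule pX)
  have "(\<Sum>a\<in>KX. \<Sum>b\<in>KY. c (a, b) * measure \<mu>X (A \<inter> cellX a) * measure \<mu>Y (UNIV \<inter> cellY b)) =
      (\<Sum>a\<in>KX. \<Sum>b\<in>KY. P (a, b) / (\<alpha> a * \<beta> b) * measure \<mu>X (A \<inter> cellX a) * \<beta> b)"
    by (simp add: c_def \<beta>_def)
  also have "\<dots> = (\<Sum>a\<in>KX. measure \<mu>X (A \<inter> cellX a))"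
  proof (rule row_identity[where P=P and KX=KX and KY=KY])
    show "(\<Sum>b\<in>KY. P (a, b)) = \<alpha> a" if "a \<in> KX" for a using rows[OF that] by (simp add: \<alpha>_def)
    show "(\<Sum>a\<in>KX. P (a, b)) = \<beta> b" if "b \<in> KY" for b using cols[OF that] by (simp add: \<beta>_def)
    show "0 \<le> measure \<mu>X (A \<inter> cellX a) \<and> measure \<mu>X (A \<inter> cellX a) \<le> \<alpha> a" for a
      unfolding \<alpha>_def using sX cellX_borel by (auto intro!: X.finite_measure_mono)
  qed (use finKX finKY Pnn in auto)
  also have "\<dots> = measure \<mu>X A"
    unfolding cellX_def
  proof (rule sum_fibers)
    show "finite_measure \<mu>X" by (rule X.finite_measure_axioms)
    show "space \<mu>X = UNIV" using sX by (rule space_borel_eq)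
  qed (use finKX cX_in sX A cellX_borel in \<open>auto simp: cellX_def\<close>)
  finally show ?thesis .
qed

lemma R_UNIV1:
  assumes B: "B \<in> sets borel"
  shows "(\<Sum>a\<in>KX. \<Sum>b\<in>KY. c (a, b) * measure \<mu>X (UNIV \<inter> cellX a) * measure \<mu>Y (B \<inter> cellY b)) = measure \<mu>Y B"
proof -
  interpret Y: prob_space \<mu>Y by (rule pY)
  have "(\<Sum>a\<in>KX. \<Sum>b\<in>KY. c (a, b) * measure \<mu>X (UNIV \<inter> cellX a) * measure \<mu>Y (B \<inter> cellY b)) =
      (\<Sum>b\<in>KY. \<Sum>a\<in>KX. (\<lambda>(b, a). P (a, b)) (b, a) / (\<beta> b * \<alpha> a) * measure \<mu>Y (B \<inter> cellY b) * \<alpha> a)"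
    by (subst sum.swap, intro sum.cong refl)
       (simp only: c_def Int_UNIV_left \<alpha>_def[symmetric] divide_inverse mult_ac prod.case fst_conv snd_conv)
  also have "\<dots> = (\<Sum>b\<in>KY. measure \<mu>Y (B \<inter> cellY b))"
  proof (rule row_identity[where P="\<lambda>(b, a). P (a, b)" and KX=KY and KY=KX])
    show "0 \<le> (\<lambda>(b, a). P (a, b)) (b, a)" if "b \<in> KY" "a \<in> KX" for a b using Pnn that by simp
    show "(\<Sum>a\<in>KX. (\<lambda>(b, a). P (a, b)) (b, a)) = \<beta> b" if "b \<in> KY" for b using cols[OF that] by (simp add: \<beta>_def)
    show "(\<Sum>b\<in>KY. (\<lambda>(b, a). P (a, b)) (b, a)) = \<alpha> a" if "a \<in> KX" for a using rows[OF that] by (simp add: \<alpha>_def)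
    show "0 \<le> measure \<mu>Y (B \<inter> cellY b) \<and> measure \<mu>Y (B \<inter> cellY b) \<le> \<beta> b" for b
      unfolding \<beta>_def using sY cellY_borel by (auto intro!: Y.finite_measure_mono)
  qed (use finKX finKY in auto)
  also have "\<dots> = measure \<mu>Y B"
    unfolding cellY_def
  proof (rule sum_fibers)
    show "finite_measure \<mu>Y" by (rule Y.finite_measure_axioms)
    show "space \<mu>Y = UNIV" using sY by (rule space_borel_eq)
  qed (use finKY cY_in sY B cellY_borel in \<open>auto simp: cellY_def\<close>)
  finally show ?thesis .
qed

lemma R_cell:
  assumes a0: "a0 \<in> KX" and b0: "b0 \<in> KY"
  shows "(\<Sum>a\<in>KX. \<Sum>b\<in>KY. c (a, b) * measure \<mu>X (cellX a0 \<inter> cellX a) * measure \<mu>Y (cellY b0 \<inter> cellY b)) = P (a0, b0)"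
proof -
  have iX: "cellX a0 \<inter> cellX a = (if a = a0 then cellX a0 else {})" for a by (auto simp: cellX_def)
  have iY: "cellY b0 \<inter> cellY b = (if b = b0 then cellY b0 else {})" for b by (auto simp: cellY_def)
  have "(\<Sum>a\<in>KX. \<Sum>b\<in>KY. c (a, b) * measure \<mu>X (cellX a0 \<inter> cellX a) * measure \<mu>Y (cellY b0 \<inter> cellY b)) =
     (\<Sum>a\<in>KX. if a = a0 then (\<Sum>b\<in>KY. if b = b0 then c (a, b) * \<alpha> a0 * \<beta> b0 else 0) else 0)"
    by (intro sum.cong refl) (auto simp: iX iY \<alpha>_def \<beta>_def intro!: sum.cong)
  also have "\<dots> = c (a0, b0) * \<alpha> a0 * \<beta> b0" using a0 b0 finKX finKY by (simp add: sum.delta)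
  also have "\<dots> = P (a0, b0)"
  proof (cases "\<alpha> a0 = 0 \<or> \<beta> b0 = 0")
    case True
    have "P (a0, b0) \<le> (\<Sum>b\<in>KY. P (a0, b))" using a0 b0 Pnn finKY by (intro member_le_sum) auto
    moreover have "P (a0, b0) \<le> (\<Sum>a\<in>KX. P (a, b0))" using a0 b0 Pnn finKX by (intro member_le_sum) auto
    ultimately have "P (a0, b0) = 0" using True rows[OF a0] cols[OF b0] Pnn[OF a0 b0]
      by (auto simp: \<alpha>_def \<beta>_def)
    then show ?thesis using True by (auto simp: c_def)
  qed (simp add: c_def)
  finally show ?thesis .
qed

lemma pi_props: "\<pi> \<in> couplings \<mu>X \<mu>Y" "\<And>k. k \<in> KX \<times> KY \<Longrightarrow> w \<pi> k = P k"
proof -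
  interpret X: prob_space \<mu>X by (rule pX)
  interpret Y: prob_space \<mu>Y by (rule pY)
  have fst_m: "fst \<in> measurable \<pi> borel" using fst_borel measurable_cong_sets[OF sets_pi refl] by blast
  have snd_m: "snd \<in> measurable \<pi> borel" using snd_borel measurable_cong_sets[OF sets_pi refl] by blast
  have m1: "marg1 \<pi> = \<mu>X"
  proof (rule measure_eqI)
    show "sets (marg1 \<pi>) = sets \<mu>X" using sX by (simp add: marg1_def)
    fix A assume "A \<in> sets (marg1 \<pi>)"
    then have A: "A \<in> sets borel" by (simp add: marg1_def)
    have "emeasure (marg1 \<pi>) A = emeasure \<pi> (fst -` A \<inter> space \<pi>)"
      unfolding marg1_def using A fst_m by (simp add: emeasure_distr)
    also have "fst -` A \<inter> space \<pi> = A \<times> UNIV" using space_pi by auto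
    also have "emeasure \<pi> (A \<times> UNIV) = ennreal (measure \<mu>X A)"
      using emeasure_pi_Times[OF A sets.top[of borel]] R_UNIV2[OF A] by simp
    also have "\<dots> = emeasure \<mu>X A" by (simp add: X.emeasure_eq_measure)
    finally show "emeasure (marg1 \<pi>) A = emeasure \<mu>X A" .
  qed
  have m2: "marg2 \<pi> = \<mu>Y"
  proof (rule measure_eqI)
    show "sets (marg2 \<pi>) = sets \<mu>Y" using sY by (simp add: marg2_def)
    fix B assume "B \<in> sets (marg2 \<pi>)"
    then have B: "B \<in> sets borel" by (simp add: marg2_def)
    have "emeasure (marg2 \<pi>) B = emeasure \<pi> (snd -` B \<inter> space \<pi>)"
      unfolding marg2_def using B snd_m by (simp add: emeasure_distr)
    also have "snd -` B \<inter> space \<pi> = UNIV \<times> B" using space_pi by auto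
    also have "emeasure \<pi> (UNIV \<times> B) = ennreal (measure \<mu>Y B)"
      using emeasure_pi_Times[OF sets.top[of borel] B] R_UNIV1[OF B] by simp
    also have "\<dots> = emeasure \<mu>Y B" by (simp add: Y.emeasure_eq_measure)
    finally show "emeasure (marg2 \<pi>) B = emeasure \<mu>Y B" .
  qed
  have "emeasure \<pi> (space \<pi>) = 1"
  proof -
    have "emeasure \<pi> (space \<pi>) = emeasure \<pi> (UNIV \<times> UNIV)" using space_pi by simp
    also have "\<dots> = ennreal (measure \<mu>X UNIV)"
      using emeasure_pi_Times[OF sets.top[of borel] sets.top[of borel]] R_UNIV2[OF sets.top[of borel]] by simp
    also have "\<dots> = 1" using X.prob_space space_borel_eq[OF sX] by simp
    finally show ?thesis .
  qed
  then have pps: "prob_space \<pi>" by (rule prob_spaceI)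
  then show "\<pi> \<in> couplings \<mu>X \<mu>Y" using m1 m2 sets_pi by (simp add: couplings_def borel_prob_def)
  interpret pp: prob_space \<pi> by (rule pps)
  fix k assume k: "k \<in> KX \<times> KY"
  obtain a0 b0 where ab: "k = (a0, b0)" "a0 \<in> KX" "b0 \<in> KY" using k by auto
  have "emeasure \<pi> (cell k) = ennreal (P k)"
    using emeasure_pi_Times[OF cellX_borel cellY_borel, of a0 b0] R_cell[OF ab(2,3)] ab(1)
    by (simp add: cell_def)
  then show "w \<pi> k = P k" using Pnn ab by (simp add: w_def pp.emeasure_eq_measure)
qed

end

lemma measure_le_scaled:
  assumes "emeasure M A \<le> ennreal c * emeasure N A" "0 \<le> c" "emeasure N A \<noteq> \<top>"
  shows "measure M A \<le> c * measure N A"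
proof -
  have "measure M A = enn2real (emeasure M A)" by (simp add: measure_def)
  also have "\<dots> \<le> enn2real (ennreal c * emeasure N A)"
    using assms by (intro enn2real_mono) (auto simp: ennreal_mult_eq_top_iff less_top[symmetric])
  also have "\<dots> = c * measure N A" using assms(2) by (simp add: enn2real_mult measure_def)
  finally show ?thesis .
qed

lemma sum_slack_zero:
  fixes s t :: "'k \<Rightarrow> real"
  assumes "finite K" "\<And>a. a \<in> K \<Longrightarrow> s a \<le> t a" "sum s K = sum t K" "a \<in> K"
  shows "s a = t a"
proof -
  have "(\<Sum>a\<in>K. t a - s a) = 0" using assms(3) by (simp add: sum_subtractf)
  then have "\<forall>a\<in>K. t a - s a = 0" using assms(1,2) by (subst (asm) sum_nonneg_eq_0_iff) auto
  then show ?thesis using assms(4) by auto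
qed

context cells
begin

lemma sum_cellX: "prob_space \<mu> \<Longrightarrow> sets \<mu> = sets borel \<Longrightarrow> (\<Sum>a\<in>KX. measure \<mu> (cellX a)) = 1"
proof -
  assume p: "prob_space \<mu>" and s: "sets \<mu> = sets borel"
  interpret prob_space \<mu> by fact
  have "(\<Sum>a\<in>KX. measure \<mu> (UNIV \<inter> cX -` {a})) = measure \<mu> UNIV"
  proof (rule sum_fibers)
    show "space \<mu> = UNIV" using s by (rule space_borel_eq)
  qed (use finKX cX_in s cellX_borel finite_measure_axioms in \<open>auto simp: cellX_def\<close>)
  then show ?thesis using prob_space space_borel_eq[OF s] by (simp add: cellX_def)
qed

lemma sum_cellY: "prob_space \<mu> \<Longrightarrow> sets \<mu> = sets borel \<Longrightarrow> (\<Sum>b\<in>KY. measure \<mu> (cellY b)) = 1"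
proof -
  assume p: "prob_space \<mu>" and s: "sets \<mu> = sets borel"
  interpret prob_space \<mu> by fact
  have "(\<Sum>b\<in>KY. measure \<mu> (UNIV \<inter> cY -` {b})) = measure \<mu> UNIV"
  proof (rule sum_fibers)
    show "space \<mu> = UNIV" using s by (rule space_borel_eq)
  qed (use finKY cY_in s cellY_borel finite_measure_axioms in \<open>auto simp: cellY_def\<close>)
  then show ?thesis using prob_space space_borel_eq[OF s] by (simp add: cellY_def)
qed

lemma limit_matrix:
  fixes \<mu>X :: "'a measure" and \<mu>Y :: "'b measure"
  assumes sX: "sets \<mu>X = sets borel" and pX: "prob_space \<mu>X"
    and sY: "sets \<mu>Y = sets borel" and pY: "prob_space \<mu>Y"
    and e0: "\<And>n. 0 \<le> fst (e n) \<and> 0 \<le> snd (e n)" and elim: "e \<longlonglongrightarrow> (0, 0)"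
    and piC: "\<And>n. \<pi> n \<in> C_eps (e n) \<mu>X \<mu>Y"
  shows "\<exists>r Pst. strict_mono r \<and> (\<forall>k\<in>KX \<times> KY. (\<lambda>n. w (\<pi> (r n)) k) \<longlonglongrightarrow> Pst k) \<and>
     construction cX cY KX KY \<mu>X \<mu>Y Pst"
proof -
  interpret X: prob_space \<mu>X by (rule pX)
  interpret Y: prob_space \<mu>Y by (rule pY)
  have bp: "borel_prob (\<pi> n)" for n using piC[of n] by (simp add: C_eps_def)
  have w01: "w (\<pi> n) k \<in> {0..1}" for n k
  proof -
    interpret prob_space "\<pi> n" using bp[of n] by (simp add: borel_prob_def)
    show ?thesis by (simp add: w_def)
  qed
  obtain r where r: "strict_mono r" "\<forall>k\<in>KX \<times> KY. convergent (\<lambda>n. w (\<pi> (r n)) k)"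
    using finite_subseq_conv[OF finK, of "\<lambda>n k. w (\<pi> n) k"] w01 by blast
  define Pst where "Pst k = lim (\<lambda>n. w (\<pi> (r n)) k)" for k
  have lim: "(\<lambda>n. w (\<pi> (r n)) k) \<longlonglongrightarrow> Pst k" if "k \<in> KX \<times> KY" for k
    using bspec[OF r(2) that] by (simp add: Pst_def convergent_LIMSEQ_iff)
  have Pnn: "0 \<le> Pst (a, b)" if "a \<in> KX" "b \<in> KY" for a b
    using lim[of "(a, b)"] that w_nonneg by (intro LIMSEQ_le_const) auto
  have e1: "(\<lambda>n. fst (e n)) \<longlonglongrightarrow> 0" using tendsto_fst[OF elim] by simp
  have e2: "(\<lambda>n. snd (e n)) \<longlonglongrightarrow> 0" using tendsto_snd[OF elim] by simp
  have rowle: "(\<Sum>b\<in>KY. Pst (a, b)) \<le> measure \<mu>X (cellX a)" if a: "a \<in> KX" for a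
  proof (rule LIMSEQ_le)
    show "(\<lambda>n. \<Sum>b\<in>KY. w (\<pi> (r n)) (a, b)) \<longlonglongrightarrow> (\<Sum>b\<in>KY. Pst (a, b))"
      using a by (intro tendsto_sum lim) auto
    have "(\<lambda>n. (1 + fst (e (r n))) * measure \<mu>X (cellX a)) \<longlonglongrightarrow> (1 + 0) * measure \<mu>X (cellX a)"
      using LIMSEQ_subseq_LIMSEQ[OF e1 r(1)] by (intro tendsto_intros) (simp add: o_def)
    then show "(\<lambda>n. (1 + fst (e (r n))) * measure \<mu>X (cellX a)) \<longlonglongrightarrow> measure \<mu>X (cellX a)" by simp
    show "\<exists>N. \<forall>n\<ge>N. (\<Sum>b\<in>KY. w (\<pi> (r n)) (a, b)) \<le> (1 + fst (e (r n))) * measure \<mu>X (cellX a)"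
    proof (intro exI allI impI)
      fix n
      have "emeasure (marg1 (\<pi> (r n))) (cellX a) \<le> ennreal (1 + fst (e (r n))) * emeasure \<mu>X (cellX a)"
        using piC[of "r n"] cellX_borel by (auto simp: C_eps_def)
      then have "measure (marg1 (\<pi> (r n))) (cellX a) \<le> (1 + fst (e (r n))) * measure \<mu>X (cellX a)"
        using e0[of "r n"] by (intro measure_le_scaled) auto
      then show "(\<Sum>b\<in>KY. w (\<pi> (r n)) (a, b)) \<le> (1 + fst (e (r n))) * measure \<mu>X (cellX a)"
        using row_sum[OF bp] by simp
    qed
  qed
  have colle: "(\<Sum>a\<in>KX. Pst (a, b)) \<le> measure \<mu>Y (cellY b)" if b: "b \<in> KY" for b
  proof (rule LIMSEQ_le)
    show "(\<lambda>n. \<Sum>a\<in>KX. w (\<pi> (r n)) (a, b)) \<longlonglongrightarrow> (\<Sum>a\<in>KX. Pst (a, b))"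
      using b by (intro tendsto_sum lim) auto
    have "(\<lambda>n. (1 + snd (e (r n))) * measure \<mu>Y (cellY b)) \<longlonglongrightarrow> (1 + 0) * measure \<mu>Y (cellY b)"
      using LIMSEQ_subseq_LIMSEQ[OF e2 r(1)] by (intro tendsto_intros) (simp add: o_def)
    then show "(\<lambda>n. (1 + snd (e (r n))) * measure \<mu>Y (cellY b)) \<longlonglongrightarrow> measure \<mu>Y (cellY b)" by simp
    show "\<exists>N. \<forall>n\<ge>N. (\<Sum>a\<in>KX. w (\<pi> (r n)) (a, b)) \<le> (1 + snd (e (r n))) * measure \<mu>Y (cellY b)"
    proof (intro exI allI impI)
      fix n
      have "emeasure (marg2 (\<pi> (r n))) (cellY b) \<le> ennreal (1 + snd (e (r n))) * emeasure \<mu>Y (cellY b)"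
        using piC[of "r n"] cellY_borel by (auto simp: C_eps_def)
      then have "measure (marg2 (\<pi> (r n))) (cellY b) \<le> (1 + snd (e (r n))) * measure \<mu>Y (cellY b)"
        using e0[of "r n"] by (intro measure_le_scaled) auto
      then show "(\<Sum>a\<in>KX. w (\<pi> (r n)) (a, b)) \<le> (1 + snd (e (r n))) * measure \<mu>Y (cellY b)"
        using col_sum[OF bp] by simp
    qed
  qed
  have tot: "(\<Sum>k\<in>KX \<times> KY. Pst k) = 1"
  proof (rule LIMSEQ_unique)
    show "(\<lambda>n. \<Sum>k\<in>KX \<times> KY. w (\<pi> (r n)) k) \<longlonglongrightarrow> (\<Sum>k\<in>KX \<times> KY. Pst k)"
      by (intro tendsto_sum lim)
    show "(\<lambda>n. \<Sum>k\<in>KX \<times> KY. w (\<pi> (r n)) k) \<longlonglongrightarrow> 1" using sum_w[OF bp] by simp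
  qed
  have rows: "(\<Sum>b\<in>KY. Pst (a, b)) = measure \<mu>X (cellX a)" if a: "a \<in> KX" for a
  proof (rule sum_slack_zero[OF finKX _ _ a])
    show "(\<Sum>b\<in>KY. Pst (a, b)) \<le> measure \<mu>X (cellX a)" if "a \<in> KX" for a using rowle that .
    show "(\<Sum>a\<in>KX. \<Sum>b\<in>KY. Pst (a, b)) = (\<Sum>a\<in>KX. measure \<mu>X (cellX a))"
      using tot sum_cellX[OF pX sX] by (simp add: sum.cartesian_product split_beta)
  qed
  have cols: "(\<Sum>a\<in>KX. Pst (a, b)) = measure \<mu>Y (cellY b)" if b: "b \<in> KY" for b
  proof (rule sum_slack_zero[OF finKY _ _ b])
    show "(\<Sum>a\<in>KX. Pst (a, b)) \<le> measure \<mu>Y (cellY b)" if "b \<in> KY" for b using colle that .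
    show "(\<Sum>b\<in>KY. \<Sum>a\<in>KX. Pst (a, b)) = (\<Sum>b\<in>KY. measure \<mu>Y (cellY b))"
      using tot sum_cellY[OF pY sY] by (subst sum.swap) (simp add: sum.cartesian_product split_beta)
  qed
  have "construction cX cY KX KY \<mu>X \<mu>Y Pst"
    unfolding construction_def construction_axioms_def
    using cells_axioms sX pX sY pY Pnn rows cols by auto
  then show ?thesis using r(1) lim by blast
qed

end

lemma dist_pair_le: "dist (a, b) (c, d) \<le> dist a c + dist b d"
  by (simp add: dist_Pair_Pair sqrt_sum_squares_le_sum)

lemma distortion_cont: "continuous_on UNIV (distortion :: ('a::polish_space \<times> 'b::polish_space) \<times> ('a \<times> 'b) \<Rightarrow> real)"
  unfolding distortion_def[abs_def] by (intro continuous_intros)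

lemma distortion_nonneg: "0 \<le> distortion z" by (simp add: distortion_def)

lemma Lp_fin:
  assumes "p \<noteq> \<top>"
  shows "Lp_distortion \<rho> p =
    (if (\<integral>\<^sup>+ z. ennreal (distortion z powr enn2real p) \<partial>(\<rho> \<Otimes>\<^sub>M \<rho>)) = \<top> then \<infinity>
     else ereal (enn2real (\<integral>\<^sup>+ z. ennreal (distortion z powr enn2real p) \<partial>(\<rho> \<Otimes>\<^sub>M \<rho>)) powr (1 / enn2real p)))"
  using assms by (simp add: Lp_distortion_def Let_def)

lemma Lp_fin_le:
  assumes "p \<noteq> \<top>" "1 \<le> p" "Lp_distortion \<rho> p \<le> ereal T"
  shows "0 \<le> T \<and> (\<integral>\<^sup>+ z. ennreal (distortion z powr enn2real p) \<partial>(\<rho> \<Otimes>\<^sub>M \<rho>)) \<le> ennreal (T powr enn2real p)"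
proof -
  define I where "I = (\<integral>\<^sup>+ z. ennreal (distortion z powr enn2real p) \<partial>(\<rho> \<Otimes>\<^sub>M \<rho>))"
  define q where "q = enn2real p"
  have q1: "1 \<le> q" using assms(1,2) unfolding q_def
    using enn2real_mono[of 1 p] by (simp add: less_top)
  have "I \<noteq> \<top>" using assms(1,3) by (auto simp: Lp_fin I_def)
  then have le: "enn2real I powr (1 / q) \<le> T" using assms(1,3) by (simp add: Lp_fin I_def q_def)
  then have T0: "0 \<le> T" using powr_ge_zero[of "enn2real I" "1 / q"] by linarith
  have "enn2real I = (enn2real I powr (1 / q)) powr q" using q1 by (simp add: powr_powr)
  also have "\<dots> \<le> T powr q" using le q1 by (intro powr_mono2) auto
  finally have le2: "ennreal (enn2real I) \<le> ennreal (T powr q)" by (rule ennreal_leI)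
  have "I = ennreal (enn2real I)" using \<open>I \<noteq> \<top>\<close> by (simp add: less_top)
  also note le2
  finally have "I \<le> ennreal (T powr q)" .
  then show ?thesis using T0 by (simp add: I_def q_def)
qed

lemma Lp_fin_bound:
  assumes "p \<noteq> \<top>" "1 \<le> p" "0 \<le> B"
    "(\<integral>\<^sup>+ z. ennreal (distortion z powr enn2real p) \<partial>(\<rho> \<Otimes>\<^sub>M \<rho>)) \<le> ennreal B"
  shows "Lp_distortion \<rho> p \<le> ereal (B powr (1 / enn2real p))"
proof -
  define I where "I = (\<integral>\<^sup>+ z. ennreal (distortion z powr enn2real p) \<partial>(\<rho> \<Otimes>\<^sub>M \<rho>))"
  have "I \<noteq> \<top>" using assms(4) by (auto simp: I_def top_unique)
  moreover have "enn2real I \<le> B"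
  proof -
    have "I \<le> ennreal B" using assms(4) by (simp add: I_def)
    from enn2real_mono[OF this] show ?thesis using assms(3) by simp
  qed
  ultimately show ?thesis using assms(1)
    by (simp add: Lp_fin I_def[symmetric] powr_mono2)
qed

lemma core_step:
  fixes p :: ennreal and \<mu>X :: "'a::polish_space measure" and \<mu>Y :: "'b::polish_space measure"
    and pis :: "nat \<Rightarrow> ('a \<times> 'b) measure"
  assumes p1: "1 \<le> p" and cmX: "compact_pmm_space \<mu>X" and cmY: "compact_pmm_space \<mu>Y"
    and e0: "\<And>n. 0 \<le> fst (e n) \<and> 0 \<le> snd (e n)" and elim: "e \<longlonglongrightarrow> (0, 0)"
    and piC: "\<And>n. pis n \<in> C_eps (e n) \<mu>X \<mu>Y" and LpT: "\<And>n. Lp_distortion (pis n) p \<le> ereal T"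
    and om: "0 < \<omega>"
  shows "\<exists>\<pi>'\<in>couplings \<mu>X \<mu>Y. (p = \<top> \<longrightarrow> Lp_distortion \<pi>' p \<le> ereal (T + 2 * \<omega>)) \<and>
     (p \<noteq> \<top> \<longrightarrow> Lp_distortion \<pi>' p \<le> ereal ((T powr enn2real p + 2 * \<omega>) powr (1 / enn2real p)))"
proof -
  note DX = cpmm_D[OF cmX] and DY = cpmm_D[OF cmY]
  define q where "q = enn2real p"
  have q1: "p \<noteq> \<top> \<Longrightarrow> 1 \<le> q" using p1 unfolding q_def
    using enn2real_mono[of 1 p] by (simp add: less_top)
  define F :: "('a \<times> 'b) \<times> ('a \<times> 'b) \<Rightarrow> real"
    where "F v = (if p = \<top> then distortion v else distortion v powr q)" for v
  have Fcont: "continuous_on UNIV F"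
  proof (cases "p = \<top>")
    case True
    then show ?thesis using distortion_cont by (simp add: F_def[abs_def])
  next
    case False
    have "continuous_on UNIV (\<lambda>v. distortion v powr q)"
      using q1[OF False] distortion_nonneg
      by (intro continuous_on_powr' distortion_cont continuous_on_const) auto
    then show ?thesis using False by (simp add: F_def[abs_def])
  qed
  have Fnn: "0 \<le> F v" for v by (simp add: F_def distortion_nonneg)
  have cU: "compact (UNIV :: (('a \<times> 'b) \<times> ('a \<times> 'b)) set)"
    using compact_Times[OF compact_Times[OF DX(4) DY(4)] compact_Times[OF DX(4) DY(4)]] by simp
  have "uniformly_continuous_on UNIV F" using Fcont cU by (rule compact_uniformly_continuous)
  then obtain \<delta> where d0: "0 < \<delta>" and dF: "\<And>x x'. dist x' x < \<delta> \<Longrightarrow> dist (F x') (F x) < \<omega>"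
    using om unfolding uniformly_continuous_on_def by blast
  define r where "r = \<delta> / 4"
  have r0: "0 < r" using d0 by (simp add: r_def)
  obtain csX :: "'a list" where csX: "\<And>x. \<exists>c\<in>set csX. dist x c < r"
    using finite_cover_list[OF DX(4) r0] by blast
  obtain csY :: "'b list" where csY: "\<And>y. \<exists>c\<in>set csY. dist y c < r"
    using finite_cover_list[OF DY(4) r0] by blast
  define cX where "cX = nearest csX r"
  define cY where "cY = nearest csY r"
  interpret cells cX cY "set csX" "set csY"
    by unfold_locales (auto simp: cX_def cY_def nearest_in csX csY nearest_meas)
  have dcc: "dist (cc z) z < 2 * r" for z
  proof -
    have "dist (cc z) z \<le> dist (cX (fst z)) (fst z) + dist (cY (snd z)) (snd z)"
      using dist_pair_le[of "cX (fst z)" "cY (snd z)" "fst z" "snd z"] by (simp add: cc_def)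
    also have "\<dots> < r + r"
      using nearest_dist[OF r0, of "fst z" csX] nearest_dist[OF r0, of "snd z" csY] unfolding cX_def cY_def
      by (intro add_strict_mono) (auto simp: dist_commute)
    finally show ?thesis by simp
  qed
  have Fclose: "\<bar>F (z, z') - F (cc z, cc z')\<bar> < \<omega>" for z z'
  proof -
    have "dist (cc z, cc z') (z, z') \<le> dist (cc z) z + dist (cc z') z'" by (rule dist_pair_le)
    also have "\<dots> < \<delta>" using dcc[of z] dcc[of z'] by (simp add: r_def)
    finally have "dist (F (cc z, cc z')) (F (z, z')) < \<omega>" by (rule dF)
    then show ?thesis by (simp add: dist_real_def abs_minus_commute)
  qed
  have Fmeas: "F \<in> borel_measurable borel" using Fcont by (rule borel_measurable_continuous_onI)
  interpret cellsF cX cY "set csX" "set csY" F \<omega>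
    by unfold_locales (use Fmeas Fnn Fclose in auto)
  obtain rr Pst where rr: "strict_mono rr" and lim: "\<And>k. k \<in> set csX \<times> set csY \<Longrightarrow> (\<lambda>n. w (pis (rr n)) k) \<longlonglongrightarrow> Pst k"
    and con: "construction cX cY (set csX) (set csY) \<mu>X \<mu>Y Pst"
    using limit_matrix[OF DX(2) DX(1) DY(2) DY(1) e0 elim piC] by blast
  interpret C: construction cX cY "set csX" "set csY" \<mu>X \<mu>Y Pst by (rule con)
  have bpC: "borel_prob C.\<pi>" using C.pi_props(1) by (simp add: couplings_def)
  have wC: "\<And>k. k \<in> set csX \<times> set csY \<Longrightarrow> w C.\<pi> k = Pst k" by (rule C.pi_props(2))
  have bp: "borel_prob (pis n)" for n using piC[of n] by (simp add: C_eps_def)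
  show ?thesis
  proof (intro bexI[OF _ C.pi_props(1)] conjI impI)
    assume pT: "p = \<top>"
    have Lpeq: "Lp_distortion \<rho> p = esssup (\<rho> \<Otimes>\<^sub>M \<rho>) (\<lambda>v. ereal (F v))" for \<rho>
      using pT by (simp add: Lp_distortion_def F_def)
    have "F (k, l) \<le> T + \<omega>" if k: "k \<in> set csX \<times> set csY" and l: "l \<in> set csX \<times> set csY"
      and pk: "0 < w C.\<pi> k" and pl: "0 < w C.\<pi> l" for k l
    proof -
      have "eventually (\<lambda>n. 0 < w (pis (rr n)) k) sequentially"
        using order_tendstoD(1)[OF lim[OF k]] pk wC[OF k] by simp
      moreover have "eventually (\<lambda>n. 0 < w (pis (rr n)) l) sequentially"
        using order_tendstoD(1)[OF lim[OF l]] pl wC[OF l] by simp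
      ultimately obtain n where "0 < w (pis (rr n)) k" "0 < w (pis (rr n)) l"
        using eventually_happens'[OF trivial_limit_sequentially] eventually_conj by blast
      from E1[OF bp this] have "ereal (F (k, l) - \<omega>) \<le> Lp_distortion (pis (rr n)) p" by (simp add: Lpeq)
      also have "\<dots> \<le> ereal T" by (rule LpT)
      finally show ?thesis by simp
    qed
    then have "esssup (C.\<pi> \<Otimes>\<^sub>M C.\<pi>) (\<lambda>v. ereal (F v)) \<le> ereal (T + \<omega> + \<omega>)"
      by (intro E2[OF bpC]) auto
    moreover have "T + \<omega> + \<omega> = T + 2 * \<omega>" by simp
    ultimately show "Lp_distortion C.\<pi> p \<le> ereal (T + 2 * \<omega>)" unfolding Lpeq by metis
  next
    assume pT: "p \<noteq> \<top>"
    have Ieq: "(\<integral>\<^sup>+ z. ennreal (distortion z powr enn2real p) \<partial>(\<rho> \<Otimes>\<^sub>M \<rho>)) = (\<integral>\<^sup>+ z. ennreal (F z) \<partial>(\<rho> \<Otimes>\<^sub>M \<rho>))" for \<rho>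
      using pT by (simp add: F_def q_def)
    have Sle: "S (w (pis n)) \<le> T powr q + \<omega>" for n
    proof -
      have "ennreal (S (w (pis n))) \<le> (\<integral>\<^sup>+ z. ennreal (F z) \<partial>(pis n \<Otimes>\<^sub>M pis n)) + ennreal \<omega>"
        by (rule I_lower[OF bp])
      also have "\<dots> \<le> ennreal (T powr q) + ennreal \<omega>"
        using Lp_fin_le[OF pT p1 LpT[of n]] by (simp add: Ieq q_def add_right_mono)
      also have "\<dots> = ennreal (T powr q + \<omega>)" using om by (simp add: ennreal_plus)
      finally have h: "ennreal (S (w (pis n))) \<le> ennreal (T powr q + \<omega>)" .
      have "0 \<le> T powr q + \<omega>" using om by simp
      from ennreal_le_iff[OF this] h show ?thesis by blast
    qed
    have "(\<lambda>n. S (w (pis (rr n)))) \<longlonglongrightarrow> S Pst"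
      unfolding S_def by (intro tendsto_sum tendsto_mult tendsto_const lim) auto
    then have SPst: "S Pst \<le> T powr q + \<omega>" using Sle by (intro LIMSEQ_le_const2) auto
    have "S (w C.\<pi>) = S Pst" unfolding S_def using wC by (intro sum.cong refl) auto
    then have "(\<integral>\<^sup>+ z. ennreal (F z) \<partial>(C.\<pi> \<Otimes>\<^sub>M C.\<pi>)) \<le> ennreal (S Pst + \<omega>)"
      using I_upper[OF bpC] by simp
    also have "\<dots> \<le> ennreal (T powr q + 2 * \<omega>)" using SPst by (intro ennreal_leI) auto
    finally have "(\<integral>\<^sup>+ z. ennreal (distortion z powr enn2real p) \<partial>(C.\<pi> \<Otimes>\<^sub>M C.\<pi>)) \<le> ennreal (T powr q + 2 * \<omega>)"
      by (simp only: Ieq)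
    show "Lp_distortion C.\<pi> p \<le> ereal ((T powr enn2real p + 2 * \<omega>) powr (1 / enn2real p))"
    proof (rule Lp_fin_bound[OF pT p1])
      show "0 \<le> T powr enn2real p + 2 * \<omega>" using om by simp
    qed (use \<open>(\<integral>\<^sup>+ z. ennreal (distortion z powr enn2real p) \<partial>(C.\<pi> \<Otimes>\<^sub>M C.\<pi>)) \<le> ennreal (T powr q + 2 * \<omega>)\<close> in \<open>simp only: q_def\<close>)
  qed
qed

lemma core:
  fixes p :: ennreal and \<mu>X :: "'a::polish_space measure" and \<mu>Y :: "'b::polish_space measure"
    and pis :: "nat \<Rightarrow> ('a \<times> 'b) measure"
  assumes p1: "1 \<le> p" and cmX: "compact_pmm_space \<mu>X" and cmY: "compact_pmm_space \<mu>Y"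
    and e0: "\<And>n. 0 \<le> fst (e n) \<and> 0 \<le> snd (e n)" and elim: "e \<longlonglongrightarrow> (0, 0)"
    and piC: "\<And>n. pis n \<in> C_eps (e n) \<mu>X \<mu>Y" and LpT: "\<And>n. Lp_distortion (pis n) p \<le> ereal T"
  shows "GW p \<mu>X \<mu>Y \<le> ereal T"
proof (rule ccontr)
  assume "\<not> GW p \<mu>X \<mu>Y \<le> ereal T"
  then have "ereal T < GW p \<mu>X \<mu>Y" by simp
  then obtain z :: real where z1: "ereal T < ereal z" and z2: "ereal z < GW p \<mu>X \<mu>Y"
    using ereal_dense2 by blast
  have Tz: "T < z" using z1 by simp
  have GWle: "GW p \<mu>X \<mu>Y \<le> Lp_distortion \<pi>' p" if "\<pi>' \<in> couplings \<mu>X \<mu>Y" for \<pi>'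
    unfolding GW_def using that by (rule INF_lower)
  show False
  proof (cases "p = \<top>")
    case True
    define \<omega> where "\<omega> = (z - T) / 2"
    have om: "0 < \<omega>" using Tz by (simp add: \<omega>_def)
    obtain \<pi>' where pc: "\<pi>' \<in> couplings \<mu>X \<mu>Y" and pl: "Lp_distortion \<pi>' p \<le> ereal (T + 2 * \<omega>)"
      using core_step[OF p1 cmX cmY e0 elim piC LpT om] True by blast
    have "T + 2 * \<omega> = z" unfolding \<omega>_def by (simp add: field_simps)
    then have "GW p \<mu>X \<mu>Y \<le> ereal z" using GWle[OF pc] pl by simp
    then show False using z2 by simp
  next
    case False
    define q where "q = enn2real p"
    have q1: "1 \<le> q" using p1 False enn2real_mono[of 1 p] by (simp add: less_top q_def)
    have T0: "0 \<le> T" using Lp_fin_le[OF False p1 LpT[of 0]] by simp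
    define \<omega> where "\<omega> = (z powr q - T powr q) / 2"
    have "T powr q < z powr q" using q1 T0 Tz by (intro powr_less_mono2) auto
    then have om: "0 < \<omega>" by (simp add: \<omega>_def)
    obtain \<pi>' where "\<pi>' \<in> couplings \<mu>X \<mu>Y"
      "Lp_distortion \<pi>' p \<le> ereal ((T powr enn2real p + 2 * \<omega>) powr (1 / enn2real p))"
      using core_step[OF p1 cmX cmY e0 elim piC LpT om] False by blast
    moreover have "(T powr enn2real p + 2 * \<omega>) powr (1 / enn2real p) = z"
    proof -
      have "T powr enn2real p + 2 * \<omega> = z powr q" unfolding \<omega>_def q_def by (simp add: field_simps)
      then show ?thesis using q1 T0 Tz by (simp add: q_def[symmetric] powr_powr)
    qed
    ultimately have "GW p \<mu>X \<mu>Y \<le> ereal z" using GWle by fastforce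
    then show False using z2 by simp
  qed
qed

theorem theorem2p14:
  fixes p :: ennreal
    and \<epsilon> :: "nat \<Rightarrow> real \<times> real"
    and \<mu>X :: "'a::polish_space measure"
    and \<mu>Y :: "'b::polish_space measure"
  assumes "1 \<le> p"
    and "\<And>n. 0 \<le> fst (\<epsilon> n) \<and> 0 \<le> snd (\<epsilon> n)"
    and "\<epsilon> \<longlonglongrightarrow> (0, 0)"
    and "compact_pmm_space \<mu>X"
    and "compact_pmm_space \<mu>Y"
  shows "(\<lambda>n. PGW (\<epsilon> n) p \<mu>X \<mu>Y) \<longlonglongrightarrow> GW p \<mu>X \<mu>Y \<and>
         (\<lambda>n. sPGW (\<epsilon> n) p \<mu>X \<mu>Y) \<longlonglongrightarrow> GW p \<mu>X \<mu>Y"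
proof -
  note p1 = assms(1) and e0 = assms(2) and elim = assms(3) and cmX = assms(4) and cmY = assms(5)
  note DX = cpmm_D[OF cmX] and DY = cpmm_D[OF cmY]
  define G where "G = GW p \<mu>X \<mu>Y"
  have PGW_le: "PGW (\<epsilon> n) p \<mu>X \<mu>Y \<le> G" for n
    unfolding PGW_def G_def GW_def
    using couplings_sub_C[of "\<epsilon> n" \<mu>X \<mu>Y] e0[of n] by (intro INF_superset_mono) auto
  have sPGW_le: "sPGW (\<epsilon> n) p \<mu>X \<mu>Y \<le> G" for n
    unfolding sPGW_def G_def GW_def
    using couplings_sub_S[of "\<epsilon> n" \<mu>X \<mu>Y] e0[of n] DX DY by (intro INF_superset_mono) auto
  have PGW_le_s: "PGW (\<epsilon> n) p \<mu>X \<mu>Y \<le> sPGW (\<epsilon> n) p \<mu>X \<mu>Y" for n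
    unfolding sPGW_def PGW_def
    using S_sub_C[of \<mu>X \<mu>Y "\<epsilon> n"] DX DY by (intro INF_superset_mono) auto
  have lower: "eventually (\<lambda>n. a < PGW (\<epsilon> n) p \<mu>X \<mu>Y) sequentially" if aG: "a < G" for a
  proof (rule ccontr)
    assume "\<not> ?thesis"
    then have "frequently (\<lambda>n. \<not> a < PGW (\<epsilon> n) p \<mu>X \<mu>Y) sequentially"
      by (simp add: not_eventually)
    then have "infinite {n. \<not> a < PGW (\<epsilon> n) p \<mu>X \<mu>Y}"
      by (simp add: frequently_def eventually_sequentially infinite_nat_iff_unbounded_le)
    then obtain s :: "nat \<Rightarrow> nat" where s: "strict_mono s" "\<And>k. \<not> a < PGW (\<epsilon> (s k)) p \<mu>X \<mu>Y"
      using infinite_enumerate by blast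
    obtain z :: real where z1: "a < ereal z" and z2: "ereal z < G" using ereal_dense2 aG by blast
    have "\<forall>k. \<exists>\<pi>. \<pi> \<in> C_eps (\<epsilon> (s k)) \<mu>X \<mu>Y \<and> Lp_distortion \<pi> p < ereal z"
    proof
      fix k
      have "PGW (\<epsilon> (s k)) p \<mu>X \<mu>Y < ereal z" using s(2)[of k] z1 by (meson not_le order_le_less_trans)
      then show "\<exists>\<pi>. \<pi> \<in> C_eps (\<epsilon> (s k)) \<mu>X \<mu>Y \<and> Lp_distortion \<pi> p < ereal z"
        unfolding PGW_def by (auto simp: INF_less_iff)
    qed
    then obtain pis where pis: "\<And>k. pis k \<in> C_eps (\<epsilon> (s k)) \<mu>X \<mu>Y" "\<And>k. Lp_distortion (pis k) p < ereal z"
      by metis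
    have "G \<le> ereal z" unfolding G_def
    proof (rule core[OF p1 cmX cmY, of "\<lambda>k. \<epsilon> (s k)" pis])
      show "(\<lambda>k. \<epsilon> (s k)) \<longlonglongrightarrow> (0, 0)" using LIMSEQ_subseq_LIMSEQ[OF elim s(1)] by (simp add: o_def)
    qed (auto simp: e0 pis(1) intro: less_imp_le[OF pis(2)])
    then show False using z2 by simp
  qed
  have t1: "(\<lambda>n. PGW (\<epsilon> n) p \<mu>X \<mu>Y) \<longlonglongrightarrow> G"
  proof (rule order_tendstoI)
    fix a assume "a < G" then show "eventually (\<lambda>n. a < PGW (\<epsilon> n) p \<mu>X \<mu>Y) sequentially" by (rule lower)
  next
    fix a assume "G < a" then show "eventually (\<lambda>n. PGW (\<epsilon> n) p \<mu>X \<mu>Y < a) sequentially"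
      using PGW_le by (auto intro: order_le_less_trans always_eventually)
  qed
  have t2: "(\<lambda>n. sPGW (\<epsilon> n) p \<mu>X \<mu>Y) \<longlonglongrightarrow> G"
  proof (rule order_tendstoI)
    fix a assume "a < G"
    from lower[OF this] show "eventually (\<lambda>n. a < sPGW (\<epsilon> n) p \<mu>X \<mu>Y) sequentially"
      by (rule eventually_mono) (use PGW_le_s in \<open>auto intro: order_less_le_trans\<close>)
  next
    fix a assume "G < a" then show "eventually (\<lambda>n. sPGW (\<epsilon> n) p \<mu>X \<mu>Y < a) sequentially"
      using sPGW_le by (auto intro: order_le_less_trans always_eventually)
  qed
  show ?thesis using t1 t2 by (simp add: G_def)
qed


end
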